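(* Let $\theta>0$ be a real number and, for integers $N\ge 1$ and $r\ge 0$, let \[ W_N(r)=\sum_{\pi \in \mathfrak{S}_N \text{ $r$-winnable}} \theta^{\pi^{-1}(N)-1}. \] Then $W_N(0)=(N-1)!$, and for $1\le r\le N-1$, \[ W_N(r) = (N-1)!\; r \sum_{i=r}^{N-1} \frac{\theta^i}{i}. \]
   Context: $\mathfrak{S}_N$ is the set of permutations $\pi=[\pi_1\pi_2\cdots\pi_N]$ of $\{1,\dots,N\}$ in one-line notation; $\pi^{-1}(N)$ is the position of the entry $N$. A left-to-right maximum of $\pi$ is an entry $\pi_j$ larger than every $\pi_i$ with $i<j$. For $r\ge 0$, the $r$-positional strategy rejects $\pi_1,\dots,\pi_r$ and then accepts the first subsequent left-to-right maximum (so for $r=0$ it accepts $\pi_1$). The permutation $\pi$ is called $r$-winnable if this strategy accepts the entry $N$. *)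

theory Defs
  imports "HOL-Combinatorics.Combinatorics" Complex_Main
begin

text \<open>A permutation p of {1..N} in one-line notation is a function p with
  p permutes {1..N}; its i-th entry is p i, and the position of the entry N
  is inv p N.\<close>

definition ltr_max :: "(nat \<Rightarrow> nat) \<Rightarrow> nat \<Rightarrow> bool" where
  "ltr_max p j \<longleftrightarrow> (\<forall>i. 1 \<le> i \<and> i < j \<longrightarrow> p i < p j)"

definition strategy_accepts :: "nat \<Rightarrow> nat \<Rightarrow> (nat \<Rightarrow> nat) \<Rightarrow> nat \<Rightarrow> bool" where
  "strategy_accepts N r p j \<longleftrightarrow>
     r < j \<and> j \<le> N \<and> ltr_max p j \<and> (\<forall>k. r < k \<and> k < j \<longrightarrow> \<not> ltr_max p k)"

definition r_winnable :: "nat \<Rightarrow> nat \<Rightarrow> (nat \<Rightarrow> nat) \<Rightarrow> bool" where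
  "r_winnable N r p \<longleftrightarrow> (\<exists>j. strategy_accepts N r p j \<and> p j = N)"

definition W :: "real \<Rightarrow> nat \<Rightarrow> nat \<Rightarrow> real" where
  "W \<theta> N r = (\<Sum>p \<in> {p. p permutes {1..N} \<and> r_winnable N r p}. \<theta> ^ (inv p N - 1))"

end

theory Submission
  imports Defs
begin

lemma class_le:
  assumes fin: "finite S" and a: "a \<in> A" and b: "b \<in> A"
  and cl: "\<And>p x y. p \<in> S \<Longrightarrow> x \<in> A \<Longrightarrow> y \<in> A \<Longrightarrow> P x p \<Longrightarrow>
            p \<circ> transpose x y \<in> S \<and> P y (p \<circ> transpose x y)"
  shows "card {p\<in>S. P a p} \<le> card {p\<in>S. P b p}"
proof (rule card_inj_on_le[where f = "\<lambda>p. p \<circ> transpose a b"])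
  show "inj_on (\<lambda>p. p \<circ> transpose a b) {p \<in> S. P a p}"
  proof (rule inj_onI)
    fix p q assume "p \<circ> transpose a b = q \<circ> transpose a b"
    then have "p \<circ> transpose a b \<circ> transpose a b = q \<circ> transpose a b \<circ> transpose a b" by simp
    then show "p = q" by (simp add: comp_assoc)
  qed
  show "(\<lambda>p. p \<circ> transpose a b) ` {p \<in> S. P a p} \<subseteq> {p \<in> S. P b p}"
    using cl a b by blast
  show "finite {p \<in> S. P b p}" using fin by simp
qed

lemma class_eq:
  assumes fin: "finite S" and a: "a \<in> A" and b: "b \<in> A"
  and cl: "\<And>p x y. p \<in> S \<Longrightarrow> x \<in> A \<Longrightarrow> y \<in> A \<Longrightarrow> P x p \<Longrightarrow>
            p \<circ> transpose x y \<in> S \<and> P y (p \<circ> transpose x y)"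
  shows "card {p\<in>S. P a p} = card {p\<in>S. P b p}"
  using class_le[of S a A b P, OF fin a b cl] class_le[of S b A a P, OF fin b a cl]
  by linarith

lemma card_union_classes:
  assumes fin: "finite S" and finA: "finite A"
  and cover: "\<And>p. p \<in> S \<Longrightarrow> \<exists>m\<in>A. P m p"
  and uniq: "\<And>p m m'. p \<in> S \<Longrightarrow> m \<in> A \<Longrightarrow> m' \<in> A \<Longrightarrow> P m p \<Longrightarrow> P m' p \<Longrightarrow> m = m'"
  and c: "\<And>m. m \<in> A \<Longrightarrow> card {p\<in>S. P m p} = c"
  shows "card S = card A * c"
proof -
  have eq: "S = (\<Union>m\<in>A. {p\<in>S. P m p})" using cover by blast
  have "card (\<Union>m\<in>A. {p\<in>S. P m p}) = (\<Sum>m\<in>A. card {p\<in>S. P m p})"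
    apply (rule card_UN_disjoint)
    using finA fin uniq by auto
  then have "card S = (\<Sum>m\<in>A. card {p\<in>S. P m p})"
    using arg_cong[OF eq, of card] by simp
  also have "\<dots> = card A * c" using c by simp
  finally show ?thesis .
qed

lemma card_pos_class:
  assumes "j \<in> {1..N}"
  shows "card {p. p permutes {1..N} \<and> p j = N} = fact (N - 1)"
proof -
  let ?S = "{p. p permutes {1..N}}"
  let ?P = "\<lambda>a p. p a = N"
  have fin: "finite ?S" by (simp add: finite_permutations)
  have cl: "\<And>p x y. p \<in> ?S \<Longrightarrow> x \<in> {1..N} \<Longrightarrow> y \<in> {1..N} \<Longrightarrow> ?P x p \<Longrightarrow>
            p \<circ> transpose x y \<in> ?S \<and> ?P y (p \<circ> transpose x y)"
  proof -
    fix p x y assume "p \<in> ?S" "x \<in> {1..N}" "y \<in> {1..N}" "?P x p"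
    then show "p \<circ> transpose x y \<in> ?S \<and> ?P y (p \<circ> transpose x y)"
      using permutes_compose[OF permutes_swap_id[of x "{1..N}" y]] by simp
  qed
  have N: "N \<ge> 1" using assms by auto
  have "card ?S = card {1..N} * card {p\<in>?S. ?P j p}"
  proof (rule card_union_classes[OF fin, of "{1..N}" ?P])
    show "\<And>p. p \<in> ?S \<Longrightarrow> \<exists>m\<in>{1..N}. ?P m p"
    proof -
      fix p assume "p \<in> ?S"
      then have pp: "p permutes {1..N}" by simp
      have "inv p N \<in> {1..N}" using N permutes_in_image[OF permutes_inv[OF pp]] by auto
      moreover have "p (inv p N) = N" using permutes_inverses[OF pp] by simp
      ultimately show "\<exists>m\<in>{1..N}. ?P m p" by blast
    qed
    show "\<And>p m m'. p \<in> ?S \<Longrightarrow> m \<in> {1..N} \<Longrightarrow> m' \<in> {1..N} \<Longrightarrow> ?P m p \<Longrightarrow> ?P m' p \<Longrightarrow> m = m'"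
      by (metis mem_Collect_eq permutes_inj injD)
    show "\<And>m. m \<in> {1..N} \<Longrightarrow> card {p\<in>?S. ?P m p} = card {p\<in>?S. ?P j p}"
      by (rule class_eq[OF fin _ assms cl])
  qed simp
  moreover have "card ?S = fact N" by (rule card_permutations) auto
  ultimately have "fact N = N * card {p\<in>?S. ?P j p}" by simp
  moreover have "fact N = N * fact (N - 1)" using N by (simp add: fact_reduce)
  ultimately have "N * card {p\<in>?S. ?P j p} = N * fact (N - 1)" by (metis (no_types))
  then have "card {p\<in>?S. ?P j p} = fact (N - 1)" using N by auto
  then show ?thesis by simp
qed

definition CC :: "nat \<Rightarrow> nat \<Rightarrow> nat \<Rightarrow> (nat \<Rightarrow> nat) set" where
  "CC N j m = {p. p permutes {1..N} \<and> p j = N \<and> (\<forall>i. 1 \<le> i \<and> i < j \<and> i \<noteq> m \<longrightarrow> p i < p m)}"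

lemma card_CC:
  assumes "1 \<le> m" "m < j" "j \<le> N"
  shows "card (CC N j m) * (j - 1) = fact (N - 1)"
proof -
  let ?S = "{p. p permutes {1..N} \<and> p j = N}"
  let ?A = "{1..j-1}"
  let ?P = "\<lambda>m p. (\<forall>i. 1 \<le> i \<and> i < j \<and> i \<noteq> m \<longrightarrow> p i < p m)"
  have fin: "finite ?S" using finite_permutations[of "{1..N}"] by (simp add: finite_subset)
  have cl: "p \<circ> transpose x y \<in> ?S \<and> ?P y (p \<circ> transpose x y)"
    if "p \<in> ?S" "x \<in> ?A" "y \<in> ?A" "?P x p" for p x y
  proof -
    have pp: "p permutes {1..N}" and pj: "p j = N" using that(1) by auto
    have xy: "x \<in> {1..N}" "y \<in> {1..N}" "x < j" "y < j" using that(2,3) assms by auto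
    have "p \<circ> transpose x y permutes {1..N}"
      using permutes_compose[OF permutes_swap_id[OF xy(1,2)] pp] .
    moreover have "(p \<circ> transpose x y) j = N" using xy pj by (simp add: transpose_apply_other)
    moreover have "?P y (p \<circ> transpose x y)"
    proof (intro allI impI)
      fix i assume i: "1 \<le> i \<and> i < j \<and> i \<noteq> y"
      have "transpose x y i \<noteq> x" using i by (auto simp: transpose_def)
      moreover have "1 \<le> transpose x y i \<and> transpose x y i < j"
        using i xy by (auto simp: transpose_def)
      ultimately have "p (transpose x y i) < p x" using that(4) by blast
      then show "(p \<circ> transpose x y) i < (p \<circ> transpose x y) y" by simp
    qed
    ultimately show ?thesis by simp
  qed
  have "card ?S = card ?A * card {p\<in>?S. ?P m p}"
  proof (rule card_union_classes[OF fin, of ?A ?P])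
    show "\<exists>m\<in>?A. ?P m p" if "p \<in> ?S" for p
    proof -
      have inj: "inj p" using that permutes_inj by blast
      have ne: "p ` ?A \<noteq> {}" using assms by auto
      have "Max (p ` ?A) \<in> p ` ?A" using Max_in[OF _ ne] by simp
      then obtain k where k: "k \<in> ?A" "p k = Max (p ` ?A)" by auto
      have "?P k p"
      proof (intro allI impI)
        fix i assume i: "1 \<le> i \<and> i < j \<and> i \<noteq> k"
        then have "p i \<in> p ` ?A" by auto
        then have "p i \<le> p k" using k by simp
        moreover have "p i \<noteq> p k" using i inj by (meson injD)
        ultimately show "p i < p k" by simp
      qed
      then show ?thesis using k by blast
    qed
    show "m1 = m2" if "p \<in> ?S" "m1 \<in> ?A" "m2 \<in> ?A" "?P m1 p" "?P m2 p" for p m1 m2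
    proof (rule ccontr)
      assume ne: "m1 \<noteq> m2"
      have "1 \<le> m2 \<and> m2 < j \<and> m2 \<noteq> m1" "1 \<le> m1 \<and> m1 < j \<and> m1 \<noteq> m2" using that(2,3) ne assms by auto
      then have "p m2 < p m1" "p m1 < p m2" using that(4,5) by blast+
      then show False by simp
    qed
    show "card {p\<in>?S. ?P k p} = card {p\<in>?S. ?P m p}" if "k \<in> ?A" for k
      by (rule class_eq[OF fin that _ cl]) (use assms in auto)
  qed simp
  moreover have "card ?S = fact (N - 1)" by (rule card_pos_class) (use assms in auto)
  moreover have "{p\<in>?S. ?P m p} = CC N j m" unfolding CC_def by (rule Collect_cong) simp
  ultimately show ?thesis by (simp add: mult.commute)
qed

lemma win0:
  assumes "N \<ge> 1" "p permutes {1..N}"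
  shows "r_winnable N 0 p \<longleftrightarrow> p 1 = N"
proof
  assume "r_winnable N 0 p"
  then obtain j where j: "strategy_accepts N 0 p j" "p j = N" unfolding r_winnable_def by blast
  have l1: "ltr_max p 1" unfolding ltr_max_def by auto
  have "j = 1"
  proof (rule ccontr)
    assume "j \<noteq> 1"
    then have "0 < (1::nat) \<and> 1 < j" using j(1) unfolding strategy_accepts_def by auto
    then show False using j(1) l1 unfolding strategy_accepts_def by blast
  qed
  then show "p 1 = N" using j by simp
next
  assume "p 1 = N"
  moreover have "strategy_accepts N 0 p 1" using assms unfolding strategy_accepts_def ltr_max_def by auto
  ultimately show "r_winnable N 0 p" unfolding r_winnable_def by blast
qed

lemma winr:
  assumes "1 \<le> r" "r < N" and pp: "p permutes {1..N}"
  shows "r_winnable N r p \<longleftrightarrow> (\<exists>jm\<in>{r+1..N} \<times> {1..r}. p \<in> CC N (fst jm) (snd jm))"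
proof
  have inj: "inj p" using pp permutes_inj by blast
  assume "r_winnable N r p"
  then obtain j where j: "strategy_accepts N r p j" "p j = N" unfolding r_winnable_def by blast
  have jr: "r < j" "j \<le> N" and nol: "\<And>k. r < k \<Longrightarrow> k < j \<Longrightarrow> \<not> ltr_max p k"
    using j(1) unfolding strategy_accepts_def by auto
  let ?A = "{1..j-1}"
  have ne: "p ` ?A \<noteq> {}" using assms jr by auto
  have "Max (p ` ?A) \<in> p ` ?A" using Max_in[OF _ ne] by simp
  then obtain k where k: "k \<in> ?A" "p k = Max (p ` ?A)" by auto
  have Pk: "p i < p k" if i: "1 \<le> i" "i < j" "i \<noteq> k" for i
  proof -
    have "p i \<in> p ` ?A" using i by auto
    then have "p i \<le> p k" using k by simp
    moreover have "p i \<noteq> p k" using i inj by (meson injD)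
    ultimately show "p i < p k" by simp
  qed
  have "k \<le> r"
  proof (rule ccontr)
    assume "\<not> k \<le> r"
    moreover have "ltr_max p k" unfolding ltr_max_def using Pk k by auto
    ultimately show False using nol[of k] k jr by (simp, arith)
  qed
  then have "p \<in> CC N j k" unfolding CC_def using pp j(2) Pk by auto
  moreover have "(j, k) \<in> {r+1..N} \<times> {1..r}" using jr k \<open>k \<le> r\<close> by auto
  ultimately show "\<exists>jm\<in>{r+1..N} \<times> {1..r}. p \<in> CC N (fst jm) (snd jm)" by force
next
  have inj: "inj p" using pp permutes_inj by blast
  assume "\<exists>jm\<in>{r+1..N} \<times> {1..r}. p \<in> CC N (fst jm) (snd jm)"
  then obtain j m where jm: "r < j" "j \<le> N" "1 \<le> m" "m \<le> r" and c: "p \<in> CC N j m" by (auto simp: Suc_le_eq)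
  have pj: "p j = N" and Pm: "\<And>i. 1 \<le> i \<Longrightarrow> i < j \<Longrightarrow> i \<noteq> m \<Longrightarrow> p i < p m"
    using c unfolding CC_def by auto
  have "ltr_max p j" unfolding ltr_max_def
  proof (intro allI impI)
    fix i assume i: "1 \<le> i \<and> i < j"
    then have "p i \<in> {1..N}" using permutes_in_image[OF pp, of i] jm by auto
    moreover have "p i \<noteq> p j" using i inj by (metis injD less_irrefl)
    ultimately show "p i < p j" using pj by auto
  qed
  moreover have "\<not> ltr_max p k" if "r < k" "k < j" for k
  proof
    assume "ltr_max p k"
    then have "p m < p k" unfolding ltr_max_def using jm that by auto
    moreover have "p k < p m" using Pm[of k] that jm by auto
    ultimately show False by simp
  qed
  ultimately have "strategy_accepts N r p j" unfolding strategy_accepts_def using jm by auto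
  then show "r_winnable N r p" unfolding r_winnable_def using pj by blast
qed

lemma sum_CC:
  assumes "1 \<le> m" "m < j" "j \<le> N"
  shows "(\<Sum>p\<in>CC N j m. \<theta> ^ (inv p N - 1)) = \<theta> ^ (j - 1) * (fact (N - 1) / real (j - 1))"
proof -
  have "(\<Sum>p\<in>CC N j m. \<theta> ^ (inv p N - 1)) = (\<Sum>p\<in>CC N j m. \<theta> ^ (j - 1))"
  proof (rule sum.cong)
    fix p assume "p \<in> CC N j m"
    then have "p permutes {1..N}" "p j = N" unfolding CC_def by auto
    then have "inv p N = j" using permutes_inv_eq by metis
    then show "\<theta> ^ (inv p N - 1) = \<theta> ^ (j - 1)" by simp
  qed simp
  also have "\<dots> = real (card (CC N j m)) * \<theta> ^ (j - 1)" by simp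
  also have "real (card (CC N j m)) = fact (N - 1) / real (j - 1)"
  proof -
    have "real (card (CC N j m)) * real (j - 1) = fact (N - 1)"
      using arg_cong[OF card_CC[OF assms], of real] by (simp add: of_nat_mult)
    moreover have "real (j - 1) > 0" using assms by simp
    ultimately show ?thesis by (simp add: field_simps)
  qed
  finally show ?thesis by simp
qed

theorem corollary2p2:
  fixes \<theta> :: real and N :: nat
  assumes "\<theta> > 0" and "N \<ge> 1"
  shows "W \<theta> N 0 = fact (N - 1) \<and>
         (\<forall>r. 1 \<le> r \<and> r \<le> N - 1 \<longrightarrow>
           W \<theta> N r = fact (N - 1) * real r * (\<Sum>i = r..N - 1. \<theta> ^ i / real i))"
proof
  have "{p. p permutes {1..N} \<and> r_winnable N 0 p} = {p. p permutes {1..N} \<and> p 1 = N}"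
    using win0[OF assms(2)] by (intro Collect_cong) blast
  then have "W \<theta> N 0 = (\<Sum>p\<in>{p. p permutes {1..N} \<and> p 1 = N}. \<theta> ^ (inv p N - 1))"
    unfolding W_def by (simp only:)
  also have "\<dots> = (\<Sum>p\<in>{p. p permutes {1..N} \<and> p 1 = N}. 1)"
  proof (rule sum.cong)
    fix p assume "p \<in> {p. p permutes {1..N} \<and> p 1 = N}"
    then have "p permutes {1..N}" "p 1 = N" by auto
    then have "inv p N = 1" using permutes_inv_eq by metis
    then show "\<theta> ^ (inv p N - 1) = 1" by simp
  qed simp
  also have "\<dots> = real (card {p. p permutes {1..N} \<and> p 1 = N})" by simp
  also have "\<dots> = real (fact (N - 1))" using card_pos_class[of 1 N] assms(2) by simp
  also have "\<dots> = fact (N - 1)" by (rule of_nat_fact)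
  finally show "W \<theta> N 0 = fact (N - 1)" .
next
  show "\<forall>r. 1 \<le> r \<and> r \<le> N - 1 \<longrightarrow>
           W \<theta> N r = fact (N - 1) * real r * (\<Sum>i = r..N - 1. \<theta> ^ i / real i)"
  proof (intro allI impI)
    fix r assume r: "1 \<le> r \<and> r \<le> N - 1"
    let ?I = "{r+1..N} \<times> {1..r}"
    let ?A = "\<lambda>jm. CC N (fst jm) (snd jm)"
    have seteq: "{p. p permutes {1..N} \<and> r_winnable N r p} = \<Union>(?A ` ?I)"
    proof (rule set_eqI)
      fix p
      show "p \<in> {p. p permutes {1..N} \<and> r_winnable N r p} \<longleftrightarrow> p \<in> \<Union>(?A ` ?I)"
      proof (cases "p permutes {1..N}")
        case True
        then have "r_winnable N r p \<longleftrightarrow> (\<exists>jm\<in>?I. p \<in> ?A jm)"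
          using winr[of r N p] r assms(2) by linarith
        then show ?thesis using True by blast
      next
        case False
        then have "p \<notin> ?A jm" for jm unfolding CC_def by blast
        then show ?thesis using False by blast
      qed
    qed
    have finA: "finite (?A jm)" for jm
    proof -
      have "?A jm \<subseteq> {p. p permutes {1..N}}" unfolding CC_def by blast
      then show ?thesis using finite_permutations[of "{1..N}"] finite_subset by auto
    qed
    have disj: "\<forall>i\<in>?I. \<forall>j\<in>?I. i \<noteq> j \<longrightarrow> ?A i \<inter> ?A j = {}"
    proof (intro ballI impI)
      fix a b assume a: "a \<in> ?I" and b: "b \<in> ?I" and ab: "a \<noteq> b"
      obtain j m where jm: "a = (j, m)" by force
      obtain j' m' where jm': "b = (j', m')" by force
      show "?A a \<inter> ?A b = {}"
      proof (rule ccontr)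
        assume "?A a \<inter> ?A b \<noteq> {}"
        then obtain p where p: "p \<in> CC N j m" "p \<in> CC N j' m'" using jm jm' by auto
        have pp: "p permutes {1..N}" and pj: "p j = N" "p j' = N"
          and P1: "\<And>i. 1 \<le> i \<Longrightarrow> i < j \<Longrightarrow> i \<noteq> m \<Longrightarrow> p i < p m"
          and P2: "\<And>i. 1 \<le> i \<Longrightarrow> i < j' \<Longrightarrow> i \<noteq> m' \<Longrightarrow> p i < p m'"
          using p unfolding CC_def mem_Collect_eq by blast+
        have "j = j'" using pj permutes_inj[OF pp] by (metis injD)
        moreover have "m \<noteq> m' \<Longrightarrow> False"
        proof -
          assume ne: "m \<noteq> m'"
          have "m < j" "m' < j" "1 \<le> m" "1 \<le> m'" using a b jm jm' \<open>j = j'\<close> by auto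
          then have "p m' < p m" "p m < p m'" using P1[of m'] P2[of m] ne \<open>j = j'\<close> by auto
          then show False by simp
        qed
        ultimately show False using ab jm jm' by auto
      qed
    qed
    have "W \<theta> N r = (\<Sum>p\<in>\<Union>(?A ` ?I). \<theta> ^ (inv p N - 1))"
      unfolding W_def seteq ..
    also have "\<dots> = (\<Sum>jm\<in>?I. \<Sum>p\<in>?A jm. \<theta> ^ (inv p N - 1))"
      by (rule sum.UNION_disjoint) (use finA disj in auto)
    also have "\<dots> = (\<Sum>jm\<in>?I. \<theta> ^ (fst jm - 1) * (fact (N - 1) / real (fst jm - 1)))"
    proof (rule sum.cong[OF refl])
      fix jm assume jm: "jm \<in> ?I"
      have "1 \<le> snd jm" "snd jm < fst jm" "fst jm \<le> N" using jm by auto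
      then show "(\<Sum>p\<in>?A jm. \<theta> ^ (inv p N - 1)) = \<theta> ^ (fst jm - 1) * (fact (N - 1) / real (fst jm - 1))"
        by (rule sum_CC)
    qed
    also have "\<dots> = (\<Sum>j\<in>{r+1..N}. \<Sum>m\<in>{1..r}. \<theta> ^ (j - 1) * (fact (N - 1) / real (j - 1)))"
      unfolding sum.cartesian_product by (rule sum.cong[OF refl]) (simp only: split_beta)
    also have "\<dots> = (\<Sum>j\<in>{Suc r..Suc (N - 1)}. real r * (\<theta> ^ (j - 1) * (fact (N - 1) / real (j - 1))))"
      using assms(2) by (intro sum.cong) auto
    also have "\<dots> = (\<Sum>i\<in>{r..N - 1}. real r * (\<theta> ^ i * (fact (N - 1) / real i)))"
      by (rule sum.shift_bounds_cl_Suc_ivl[THEN trans]) simp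
    also have "\<dots> = fact (N - 1) * real r * (\<Sum>i = r..N - 1. \<theta> ^ i / real i)"
    proof -
      have "real r * (\<theta> ^ i * (fact (N - 1) / real i)) = (fact (N - 1) * real r) * (\<theta> ^ i / real i)" for i
        by (simp add: mult_ac)
      then show ?thesis by (simp only: sum_distrib_left)
    qed
    finally show "W \<theta> N r = fact (N - 1) * real r * (\<Sum>i = r..N - 1. \<theta> ^ i / real i)" .
  qed
qed

end
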